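(* Let $X$ have the $\Gamma(\alpha,1)$ distribution (density $x^{\alpha-1}e^{-x}/\Gamma(\alpha)$, $x\geq 0$), where $\alpha>0$. Then for each fixed $x\geq 0$, $\lim_{s\to+\infty}\overline{T}_{X,s}(x)=e^{-x}$, the limit being over integers $s$.
   Context: For a nonnegative absolutely continuous random variable $X$ with density $f_X$, set $\overline{T}_{X,0}=f_X$, $\mu_{X,0}=1$, and for integers $s\geq 1$ define recursively $\overline{T}_{X,s}(x)=\frac{1}{\mu_{X,s-1}}\int_x^\infty\overline{T}_{X,s-1}(t)\,dt$ and $\mu_{X,s}=\int_0^\infty\overline{T}_{X,s}(t)\,dt$. $\overline{T}_{X,s}$ is the tail (survival function) of the $s$-iterated distribution induced by $X$. *)

theory Defs
  imports "HOL-Analysis.Analysis"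
begin

primrec iter_tail :: "(real \<Rightarrow> real) \<Rightarrow> nat \<Rightarrow> real \<Rightarrow> real" where
  "iter_tail f 0 = f"
| "iter_tail f (Suc s) = (\<lambda>x. (LINT t:{x..}|lborel. iter_tail f s t) /
      (if s = 0 then 1 else (LINT t:{0..}|lborel. iter_tail f s t)))"

definition iter_mean :: "(real \<Rightarrow> real) \<Rightarrow> nat \<Rightarrow> real" where
  "iter_mean f s = (if s = 0 then 1 else (LINT t:{0..}|lborel. iter_tail f s t))"

definition gamma_density :: "real \<Rightarrow> real \<Rightarrow> real" where
  "gamma_density \<alpha> x = (if 0 \<le> x then x powr (\<alpha> - 1) * exp (- x) / Gamma \<alpha> else 0)"

end

theory Submission
  imports Defs "HOL-Real_Asymp.Real_Asymp"
begin


lemma gd_meas[measurable]: "gamma_density a \<in> borel_measurable borel"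
  unfolding gamma_density_def by measurable

lemma gd_nonneg: "a > 0 \<Longrightarrow> gamma_density a t \<ge> 0"
  unfolding gamma_density_def by auto

definition NN :: "real \<Rightarrow> nat \<Rightarrow> real \<Rightarrow> ennreal" where
  "NN a n x = (\<integral>\<^sup>+t. ennreal (indicator {x..} t * (t-x)^n * gamma_density a t) \<partial>lborel)"

definition HH :: "real \<Rightarrow> nat \<Rightarrow> real \<Rightarrow> ennreal" where
  "HH a n x = (\<integral>\<^sup>+u. ennreal (indicator {0..} u * u^n * (u+x) powr (a-1) / exp u) \<partial>lborel)"

lemma NN_HH:
  assumes "a > 0" "x \<ge> 0"
  shows "NN a n x = HH a n x * ennreal (exp (-x) / Gamma a)"
proof -
  have "NN a n x = (\<integral>\<^sup>+u. ennreal (indicator {x..} (x + 1 * u) * ((x + 1*u)-x)^n * gamma_density a (x + 1 * u)) \<partial>lborel)"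
    unfolding NN_def by (subst nn_integral_real_affine[where c=1 and t=x]) auto
  also have "\<dots> = (\<integral>\<^sup>+u. ennreal (indicator {0..} u * u^n * (u+x) powr (a-1) / exp u) * ennreal (exp (-x) / Gamma a) \<partial>lborel)"
    using assms
    by (intro nn_integral_cong) (auto simp: gamma_density_def indicator_def ennreal_mult'[symmetric] exp_diff exp_minus field_simps add.commute)
  also have "\<dots> = HH a n x * ennreal (exp (-x) / Gamma a)"
    unfolding HH_def by (subst nn_integral_multc) auto
  finally show ?thesis .
qed

lemma HH0:
  assumes "a > 0"
  shows "HH a n 0 = ennreal (Gamma (real n + a))"
proof -
  have "HH a n 0 = (\<integral>\<^sup>+u. ennreal (indicator {0..} u * u powr (real n + a - 1) / exp u) \<partial>lborel)"
    unfolding HH_def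
  proof (intro nn_integral_cong)
    fix u :: real
    show "ennreal (indicator {0..} u * u ^ n * (u + 0) powr (a - 1) / exp u) =
         ennreal (indicator {0..} u * u powr (real n + a - 1) / exp u)"
    proof (cases "u > 0")
      case True
      then have "u ^ n * u powr (a - 1) = u powr (real n + a - 1)"
        by (simp add: powr_realpow[symmetric] powr_add[symmetric] add_diff_eq)
      then show ?thesis by (simp add: mult.assoc)
    qed (auto simp: indicator_def)
  qed
  also have "\<dots> = ennreal (Gamma (real n + a))"
    using assms by (subst Gamma_conv_nn_integral_real) auto
  finally show ?thesis .
qed



lemma up_pow:
  fixes y :: real
  assumes "y \<ge> 0" "m \<ge> 1"
  shows "(1+y)^m \<le> 1 + 4^m * (y + y^m)"
  using assms(2)
proof (induction m rule: dec_induct)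
  case base
  then show ?case using assms by simp
next
  case (step k)
  have a: "y^2 \<le> y + y^(Suc k)"
  proof (cases "y \<le> 1")
    case True
    then have "y^2 \<le> y" using assms by (simp add: power2_eq_square mult_left_le)
    then show ?thesis using assms zero_le_power[of y "Suc k"] by linarith
  next
    case False
    then have "y^2 \<le> y^(Suc k)" using step by (intro power_increasing) auto
    then show ?thesis using assms by linarith
  qed
  have b: "y^k \<le> y + y^(Suc k)"
  proof (cases "y \<le> 1")
    case True
    then have "y^k \<le> y" using assms step(1) by (simp add: power_le_one_iff power_decreasing[of 1 k y, simplified])
    then show ?thesis using assms zero_le_power[of y "Suc k"] by linarith
  next
    case False
    then have "y^k \<le> y^(Suc k)" by (intro power_increasing) auto
    then show ?thesis using assms by linarith
  qed
  have "(1+y)^(Suc k) = (1+y)^k * (1+y)" by simp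
  also have "\<dots> \<le> (1 + 4^k * (y + y^k)) * (1+y)"
    using step assms by (intro mult_right_mono) auto
  also have "\<dots> = 1 + y + 4^k * (y + y^k + y^2 + y^Suc k)"
    by (simp add: algebra_simps power2_eq_square)
  also have "\<dots> \<le> 1 + y + 4^k * (3*y + 3*y^Suc k)"
    using a b by (intro add_left_mono mult_left_mono) auto
  also have "\<dots> \<le> 1 + 4^Suc k * (y + y^Suc k)"
  proof -
    have "(1::real) \<le> 4^k" by simp
    then have "y \<le> 4^k * y" using assms by (simp add: mult_le_cancel_right1)
    moreover have "0 \<le> 4^k * y^Suc k" using assms by simp
    moreover have "1 + y + 4^k * (3*y + 3*y^Suc k) = 1 + y + 3*(4^k*y) + 3*(4^k*y^Suc k)"
      by (simp add: algebra_simps)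
    moreover have "1 + 4^Suc k * (y + y^Suc k) = 1 + 4*(4^k*y) + 4*(4^k*y^Suc k)"
      by (simp add: algebra_simps)
    ultimately show ?thesis by linarith
  qed
  finally show ?case .
qed

lemma up_powr:
  fixes y b :: real
  assumes "y \<ge> 0" "m \<ge> 1" "b \<le> real m"
  shows "(1+y) powr b \<le> 1 + 4^m * (y + y^m)"
proof -
  have "(1+y) powr b \<le> (1+y) powr real m"
    using assms by (intro powr_mono) auto
  also have "\<dots> = (1+y)^m" using assms by (simp add: powr_realpow)
  finally show ?thesis using up_pow[OF assms(1,2)] by linarith
qed

lemma low_powr:
  fixes y b :: real
  assumes "y \<ge> 0" "- b \<le> real m"
  shows "1 \<le> (1+y) powr b + real m * y"
proof -
  have "(1+y) powr (- real m) \<le> (1+y) powr b"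
    using assms by (intro powr_mono) auto
  moreover have "(1+y) powr (- real m) = (1 + (- y/(1+y)))^m"
    using assms by (simp add: powr_minus powr_realpow field_simps power_divide)
  moreover have "1 + real m * (- y/(1+y)) \<le> (1 + (- y/(1+y)))^m"
    using assms by (intro Bernoulli_inequality) (simp add: field_simps)
  moreover have "real m * (y/(1+y)) \<le> real m * y"
    using assms by (intro mult_left_mono) (auto simp: field_simps)
  ultimately show ?thesis by simp
qed



lemma pt_bounds:
  fixes u x b c :: real
  assumes u: "u > 0" and x: "x \<ge> 0" and m: "m \<ge> 1" "b \<le> real m" "- b \<le> real m"
    and c: "c = real n + b + 1"
  shows "u^n * (u+x) powr b \<le> u powr (c-1) + 4^m*x * u powr (c-1-1) + 4^m*x^m * u powr (c-real m-1)"
    and "u powr (c-1) \<le> u^n * (u+x) powr b + real m * x * u powr (c-1-1)"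
proof -
  define y where "y = x/u"
  have y: "y \<ge> 0" using u x by (simp add: y_def)
  have e1: "u^n * (u+x) powr b = u powr (c-1) * (1+y) powr b"
  proof -
    have "u + x = u * (1+y)" using u by (simp add: y_def field_simps)
    then have "(u+x) powr b = u powr b * (1+y) powr b" using u y by (simp add: powr_mult)
    moreover have "u^n * u powr b = u powr (c-1)"
      using u c by (simp add: powr_realpow[symmetric] powr_add[symmetric])
    ultimately show ?thesis by simp
  qed
  have e2: "u powr (c-1-1) = u powr (c-1) / u" using u by (simp add: powr_diff power2_eq_square)
  have e3: "u powr (c-real m-1) = u powr (c-1) / u^m"
  proof -
    have "c - real m - 1 = (c-1) - real m" by simp
    then show ?thesis using u by (simp only: powr_diff powr_realpow)
  qed
  have p: "u powr (c-1) > 0" using u by simp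
  have "u^n * (u+x) powr b \<le> u powr (c-1) * (1 + 4^m * (y + y^m))"
    unfolding e1 using up_powr[OF y m(1,2)] p by (intro mult_left_mono) auto
  also have "\<dots> = u powr (c-1) + 4^m*x * u powr (c-1-1) + 4^m*x^m * u powr (c-real m-1)"
    unfolding e2 e3 y_def using u by (simp add: field_simps power_divide)
  finally show "u^n * (u+x) powr b \<le> u powr (c-1) + 4^m*x * u powr (c-1-1) + 4^m*x^m * u powr (c-real m-1)" .
  have "u powr (c-1) * 1 \<le> u powr (c-1) * ((1+y) powr b + real m * y)"
    using low_powr[OF y m(3)] p by (intro mult_left_mono) auto
  also have "\<dots> = u^n * (u+x) powr b + real m * x * u powr (c-1-1)"
    unfolding e1 e2 y_def using u by (simp add: field_simps)
  finally show "u powr (c-1) \<le> u^n * (u+x) powr b + real m * x * u powr (c-1-1)" by simp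
qed



definition gint :: "real \<Rightarrow> real \<Rightarrow> real" where
  "gint s u = indicator {0..} u * u powr (s - 1) / exp u"

lemma gint_nonneg: "gint s u \<ge> 0" by (simp add: gint_def)

lemma gint_int: "s > 0 \<Longrightarrow> (\<integral>\<^sup>+u. ennreal (gint s u) \<partial>lborel) = ennreal (Gamma s)"
  unfolding gint_def by (simp add: Gamma_conv_nn_integral_real)

lemma gint_meas[measurable]: "gint s \<in> borel_measurable borel"
  unfolding gint_def by measurable

lemma HH_bounds:
  assumes a: "a > 0" and x: "x \<ge> 0" and m: "m \<ge> 1" "a - 1 \<le> real m" "1 - a \<le> real m"
    and n: "n \<ge> m"
  shows "HH a n x \<le> ennreal (Gamma (real n + a) + 4^m*x * Gamma (real n + a - 1) + 4^m*x^m * Gamma (real n + a - real m))"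
    and "ennreal (Gamma (real n + a)) \<le> HH a n x + ennreal (real m * x * Gamma (real n + a - 1))"
proof -
  define c where "c = real n + a"
  have c: "c = real n + (a-1) + 1" by (simp add: c_def)
  have c1: "c - 1 > 0" "c - real m > 0" using n m a by (auto simp: c_def)
  have n1: "n \<ge> 1" using n m by simp
  let ?h = "\<lambda>u. indicator {0..} u * u^n * (u+x) powr (a-1) / exp u"
  have hnn: "?h u \<ge> 0" for u by (simp add: indicator_def)
  have pu: "?h u \<le> gint c u + 4^m*x * gint (c-1) u + 4^m*x^m * gint (c - real m) u" for u
  proof (cases "u > 0")
    case True
    have "u^n * (u+x) powr (a-1) \<le> u powr (c-1) + 4^m*x * u powr (c-1-1) + 4^m*x^m * u powr (c-real m-1)"
      by (rule pt_bounds(1)[OF True x m(1) m(2) _ c]) (use m in simp)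
    then have "u^n * (u+x) powr (a-1) / exp u \<le> (u powr (c-1) + 4^m*x * u powr (c-1-1) + 4^m*x^m * u powr (c-real m-1)) / exp u"
      by (intro divide_right_mono) auto
    then show ?thesis using True by (simp add: gint_def add_divide_distrib)
  next
    case False
    then have "?h u = 0" using n1 by (cases "u = 0") (auto simp: indicator_def)
    moreover have "0 \<le> gint c u + 4^m*x * gint (c-1) u + 4^m*x^m * gint (c - real m) u"
      using x by (intro add_nonneg_nonneg mult_nonneg_nonneg) (auto simp: gint_nonneg)
    ultimately show ?thesis by linarith
  qed
  have pl: "gint c u \<le> ?h u + real m * x * gint (c-1) u" for u
  proof (cases "u > 0")
    case True
    have "u powr (c-1) \<le> u^n * (u+x) powr (a-1) + real m * x * u powr (c-1-1)"
      by (rule pt_bounds(2)[OF True x m(1) m(2) _ c]) (use m in simp)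
    then have "u powr (c-1) / exp u \<le> (u^n * (u+x) powr (a-1) + real m * x * u powr (c-1-1)) / exp u"
      by (intro divide_right_mono) auto
    then show ?thesis using True by (simp add: gint_def add_divide_distrib)
  next
    case False
    then show ?thesis by (auto simp: gint_def indicator_def)
  qed
  have "HH a n x \<le> (\<integral>\<^sup>+u. ennreal (gint c u) + ennreal (4^m*x) * ennreal (gint (c-1) u) + ennreal (4^m*x^m) * ennreal (gint (c - real m) u) \<partial>lborel)"
    unfolding HH_def
  proof (intro nn_integral_mono)
    fix u
    have "ennreal (?h u) \<le> ennreal (gint c u + 4^m*x * gint (c-1) u + 4^m*x^m * gint (c - real m) u)"
      using pu by (intro ennreal_leI) auto
    also have "\<dots> = ennreal (gint c u) + ennreal (4^m*x) * ennreal (gint (c-1) u) + ennreal (4^m*x^m) * ennreal (gint (c - real m) u)"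
      using x by (simp add: gint_nonneg ennreal_plus[symmetric] ennreal_mult[symmetric] del: ennreal_plus)
    finally show "ennreal (?h u) \<le> \<dots>" .
  qed
  also have "\<dots> = ennreal (Gamma c) + ennreal (4^m*x) * ennreal (Gamma (c-1)) + ennreal (4^m*x^m) * ennreal (Gamma (c - real m))"
    using c1 by (simp add: nn_integral_add nn_integral_cmult gint_int)
  also have "\<dots> = ennreal (Gamma c + 4^m*x * Gamma (c-1) + 4^m*x^m * Gamma (c - real m))"
    using x c1 by (simp add: ennreal_plus[symmetric] ennreal_mult[symmetric] less_imp_le del: ennreal_plus)
  finally show "HH a n x \<le> ennreal (Gamma (real n + a) + 4^m*x * Gamma (real n + a - 1) + 4^m*x^m * Gamma (real n + a - real m))"
    by (simp add: c_def)
  have "ennreal (Gamma c) = (\<integral>\<^sup>+u. ennreal (gint c u) \<partial>lborel)" using c1 by (simp add: gint_int)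
  also have "\<dots> \<le> (\<integral>\<^sup>+u. ennreal (?h u) + ennreal (real m * x) * ennreal (gint (c-1) u) \<partial>lborel)"
  proof (intro nn_integral_mono)
    fix u
    have "ennreal (gint c u) \<le> ennreal (?h u + real m * x * gint (c-1) u)"
      using pl by (intro ennreal_leI) auto
    also have "\<dots> = ennreal (?h u) + ennreal (real m * x) * ennreal (gint (c-1) u)"
      using x hnn[of u] by (simp add: gint_nonneg ennreal_plus[symmetric] ennreal_mult[symmetric] del: ennreal_plus)
    finally show "ennreal (gint c u) \<le> \<dots>" .
  qed
  also have "\<dots> = HH a n x + ennreal (real m * x) * ennreal (Gamma (c-1))"
    using c1 unfolding HH_def by (simp add: nn_integral_add nn_integral_cmult gint_int)
  also have "\<dots> = HH a n x + ennreal (real m * x * Gamma (c-1))"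
    using x c1 by (simp add: ennreal_mult[symmetric] less_imp_le)
  finally show "ennreal (Gamma (real n + a)) \<le> HH a n x + ennreal (real m * x * Gamma (real n + a - 1))"
    by (simp add: c_def)
qed



lemma NN0: "a > 0 \<Longrightarrow> NN a n 0 = ennreal (Gamma (real n + a) / Gamma a)"
  using NN_HH[of a 0 n] HH0[of a n] by (simp add: ennreal_mult[symmetric] divide_inverse)

lemma NN_mono:
  assumes "a > 0" "x \<ge> 0"
  shows "NN a n x \<le> NN a n 0"
  unfolding NN_def
proof (intro nn_integral_mono ennreal_leI)
  fix t :: real
  show "indicator {x..} t * (t - x) ^ n * gamma_density a t \<le> indicator {0..} t * (t - 0) ^ n * gamma_density a t"
  proof (cases "t \<ge> x")
    case True
    then have "(t - x)^n \<le> t^n" using assms by (intro power_mono) auto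
    then have "(t - x)^n * gamma_density a t \<le> t^n * gamma_density a t"
      using gd_nonneg[of a t] assms by (intro mult_right_mono) auto
    then show ?thesis using True assms by (simp add: indicator_def)
  next
    case False
    have "0 \<le> indicator {0..} t * (t - 0) ^ n * gamma_density a t"
      using gd_nonneg[of a t] assms by (simp add: indicator_def)
    moreover have "indicator {x..} t * (t - x) ^ n * gamma_density a t = 0"
      using False by (simp add: indicator_def)
    ultimately show ?thesis by linarith
  qed
qed

lemma NN_fin: "a > 0 \<Longrightarrow> x \<ge> 0 \<Longrightarrow> NN a n x < \<infinity>"
proof -
  assume "a > 0" "x \<ge> 0"
  then have "NN a n x \<le> ennreal (Gamma (real n + a) / Gamma a)"
    using NN_mono[of a x n] NN0[of a n] by simp
  then show ?thesis by (rule le_less_trans) simp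
qed

definition GG :: "real \<Rightarrow> nat \<Rightarrow> real \<Rightarrow> real" where
  "GG a n x = enn2real (NN a n x)"

lemma NN_eq: "a > 0 \<Longrightarrow> x \<ge> 0 \<Longrightarrow> NN a n x = ennreal (GG a n x)"
  unfolding GG_def using NN_fin[of a x n] by simp

lemma GG0: "a > 0 \<Longrightarrow> GG a n 0 = Gamma (real n + a) / Gamma a"
  unfolding GG_def using NN0[of a n] by simp

lemma GG_pos: "a > 0 \<Longrightarrow> GG a n 0 > 0"
  using GG0[of a n] by simp

lemma GG_nonneg: "GG a n x \<ge> 0"
  unfolding GG_def by simp

lemma GG_lint: "a > 0 \<Longrightarrow> (LINT t:{x..}|lborel. (t-x)^n * gamma_density a t) = GG a n x"
  unfolding set_lebesgue_integral_def NN_def GG_def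
  apply (subst integral_eq_nn_integral)
    apply (simp add: indicator_def; measurable)
   apply (auto simp: indicator_def gd_nonneg)
  apply (simp add: mult.assoc)
  done

lemma NN_meas: "(\<lambda>y. NN a n y) \<in> borel_measurable borel"
proof -
  have "(\<lambda>(y,t). ennreal (indicator {y..} t * (t-y)^n * gamma_density a t)) \<in> borel_measurable (borel \<Otimes>\<^sub>M lborel)"
    by (simp add: indicator_def) measurable
  then show ?thesis unfolding NN_def by (rule lborel.borel_measurable_nn_integral)
qed

lemma GG_meas: "GG a n \<in> borel_measurable borel"
  unfolding GG_def[abs_def] by (intro borel_measurable_enn2real NN_meas)

lemma inner_int:
  fixes t x :: real
  assumes "x \<le> t"
  shows "(\<integral>\<^sup>+y. ennreal (indicator {x..t} y * (t-y)^n) \<partial>lborel) = ennreal ((t-x)^(Suc n) / real (Suc n))"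
proof -
  let ?F = "\<lambda>y. - ((t-y)^(Suc n) / real (Suc n))"
  have "((\<lambda>y. (t-y)^n) has_integral (?F t - ?F x)) {x..t}"
  proof (rule fundamental_theorem_of_calculus[OF assms])
    fix y assume "y \<in> {x..t}"
    have "(?F has_real_derivative (t-y)^n) (at y within {x..t})"
      by (auto intro!: derivative_eq_intros simp del: power_Suc)
    then show "(?F has_vector_derivative (t-y)^n) (at y within {x..t})"
      by (simp add: has_real_derivative_iff_has_vector_derivative)
  qed
  then have "((\<lambda>y. (t-y)^n) has_integral ((t-x)^(Suc n) / real (Suc n))) {x..t}" by simp
  moreover have "\<And>y. y \<in> {x..t} \<Longrightarrow> 0 \<le> (t-y)^n" by simp
  ultimately show ?thesis using nn_integral_has_integral_lebesgue[of "{x..t}" "\<lambda>y. (t-y)^n"] by simp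
qed



lemma tonelli_step:
  assumes a: "a > 0" and x: "x \<ge> 0"
  shows "(\<integral>\<^sup>+y. ennreal (indicator {x..} y * GG a n y) \<partial>lborel) = NN a (Suc n) x * ennreal (1 / real (Suc n))"
proof -
  let ?F = "\<lambda>y t. ennreal (indicator {x..} y * indicator {y..} t * (t-y)^n * gamma_density a t)"
  have "(\<integral>\<^sup>+y. ennreal (indicator {x..} y * GG a n y) \<partial>lborel) = (\<integral>\<^sup>+y. \<integral>\<^sup>+t. ?F y t \<partial>lborel \<partial>lborel)"
  proof (intro nn_integral_cong)
    fix y :: real
    show "ennreal (indicator {x..} y * GG a n y) = (\<integral>\<^sup>+t. ?F y t \<partial>lborel)"
    proof (cases "x \<le> y")
      case True
      then have "ennreal (indicator {x..} y * GG a n y) = NN a n y"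
        using NN_eq[of a y n] a x by simp
      also have "\<dots> = (\<integral>\<^sup>+t. ?F y t \<partial>lborel)"
        unfolding NN_def using True by (intro nn_integral_cong) (simp add: indicator_def)
      finally show ?thesis .
    next
      case False
      then show ?thesis by (simp add: indicator_def)
    qed
  qed
  also have "\<dots> = (\<integral>\<^sup>+t. \<integral>\<^sup>+y. ?F y t \<partial>lborel \<partial>lborel)"
  proof -
    have m: "(\<lambda>(t,y). ?F y t) \<in> borel_measurable (lborel \<Otimes>\<^sub>M lborel)"
      by (simp add: indicator_def case_prod_unfold) measurable
    show ?thesis using lborel_pair.Fubini'[OF m] by simp
  qed
  also have "\<dots> = (\<integral>\<^sup>+t. ennreal (indicator {x..} t * (t-x)^(Suc n) * gamma_density a t) * ennreal (1 / real (Suc n)) \<partial>lborel)"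
  proof (intro nn_integral_cong)
    fix t :: real
    have "(\<integral>\<^sup>+y. ?F y t \<partial>lborel) = (\<integral>\<^sup>+y. ennreal (indicator {x..t} y * (t-y)^n) * ennreal (gamma_density a t) \<partial>lborel)"
    proof (intro nn_integral_cong)
      fix y :: real
      show "?F y t = ennreal (indicator {x..t} y * (t-y)^n) * ennreal (gamma_density a t)"
      proof (cases "x \<le> y \<and> y \<le> t")
        case True
        then show ?thesis using gd_nonneg[OF a, of t] by (simp add: indicator_def ennreal_mult[symmetric])
      next
        case False
        then show ?thesis by (auto simp: indicator_def)
      qed
    qed
    also have "\<dots> = (\<integral>\<^sup>+y. ennreal (indicator {x..t} y * (t-y)^n) \<partial>lborel) * ennreal (gamma_density a t)"
      by (rule nn_integral_multc) (simp add: indicator_def; measurable)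
    also have "\<dots> = ennreal (indicator {x..} t * (t-x)^(Suc n) * gamma_density a t) * ennreal (1 / real (Suc n))"
    proof (cases "x \<le> t")
      case True
      then have "(t-x)^(Suc n) \<ge> 0" by simp
      then show ?thesis using True inner_int[OF True, of n] gd_nonneg[OF a, of t]
        by (simp add: ennreal_mult[symmetric] indicator_def)
    next
      case False
      then have "indicator {x..t} y = (0::real)" for y by (simp add: indicator_def)
      then show ?thesis using False by (simp add: indicator_def)
    qed
    finally show "(\<integral>\<^sup>+y. ?F y t \<partial>lborel) = \<dots>" .
  qed
  also have "\<dots> = NN a (Suc n) x * ennreal (1 / real (Suc n))"
    unfolding NN_def by (rule nn_integral_multc) (simp add: indicator_def; measurable)
  finally show ?thesis .
qed

lemma GG_step:
  assumes a: "a > 0" and x: "x \<ge> 0"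
  shows "(LINT y:{x..}|lborel. GG a n y) = GG a (Suc n) x / real (Suc n)"
proof -
  have "(LINT y:{x..}|lborel. GG a n y) = enn2real (\<integral>\<^sup>+y. ennreal (indicator {x..} y * GG a n y) \<partial>lborel)"
    unfolding set_lebesgue_integral_def
    by (subst integral_eq_nn_integral) (auto simp: GG_nonneg intro: borel_measurable_times GG_meas)
  also have "\<dots> = GG a (Suc n) x / real (Suc n)"
    using tonelli_step[OF a x, of n] unfolding GG_def by (simp add: enn2real_mult)
  finally show ?thesis .
qed



lemma cancel2: "k \<noteq> 0 \<Longrightarrow> g \<noteq> 0 \<Longrightarrow> (A / k / g) / (B / k / g) = (A::real) / B"
  by (cases "B = 0") (simp_all add: field_simps)

lemma iter_eq:
  assumes a: "a > 0"
  shows "\<forall>x\<ge>0. iter_tail (gamma_density a) (Suc n) x = GG a n x / GG a n 0"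
proof (induction n)
  case 0
  show ?case
  proof (intro allI impI)
    fix x :: real assume "x \<ge> 0"
    have "GG a 0 0 = 1" using GG0[OF a, of 0] a Gamma_real_pos[OF a] by simp
    moreover have "(LINT t:{x..}|lborel. gamma_density a t) = GG a 0 x"
      using GG_lint[OF a, of x 0] by simp
    ultimately show "iter_tail (gamma_density a) (Suc 0) x = GG a 0 x / GG a 0 0" by simp
  qed
next
  case (Suc n)
  show ?case
  proof (intro allI impI)
    fix x :: real assume x: "x \<ge> 0"
    have I: "(LINT y:{z..}|lborel. iter_tail (gamma_density a) (Suc n) y) = GG a (Suc n) z / real (Suc n) / GG a n 0"
      if z: "z \<ge> 0" for z
    proof -
      have "(LINT y:{z..}|lborel. iter_tail (gamma_density a) (Suc n) y) = (LINT y:{z..}|lborel. GG a n y / GG a n 0)"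
        using Suc.IH z by (intro set_lebesgue_integral_cong) auto
      also have "\<dots> = GG a (Suc n) z / real (Suc n) / GG a n 0"
        using GG_step[OF a z, of n] by simp
      finally show ?thesis .
    qed
    have p1: "GG a n 0 > 0" "GG a (Suc n) 0 > 0" using GG_pos[OF a] by auto
    have "iter_tail (gamma_density a) (Suc (Suc n)) x
        = (GG a (Suc n) x / real (Suc n) / GG a n 0) / (GG a (Suc n) 0 / real (Suc n) / GG a n 0)"
      using I[OF x] I[of 0] by (simp only: iter_tail.simps(2)[of "gamma_density a" "Suc n"] nat.distinct if_False)
    also have "\<dots> = GG a (Suc n) x / GG a (Suc n) 0"
      using p1 by (intro cancel2) auto
    finally show "iter_tail (gamma_density a) (Suc (Suc n)) x = GG a (Suc n) x / GG a (Suc n) 0" .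
  qed
qed

lemma gam1: "(z::real) > 0 \<Longrightarrow> Gamma (z + 1) = z * Gamma z"
  by (rule Gamma_plus1) (auto elim!: nonpos_Ints_cases)

lemma poch_ge:
  fixes z :: real
  assumes "z \<ge> 1" "m \<ge> 1"
  shows "pochhammer z m \<ge> z"
  using assms(2)
proof (induction m rule: dec_induct)
  case base then show ?case by simp
next
  case (step k)
  have "pochhammer z (Suc k) = pochhammer z k * (z + real k)" by (simp add: pochhammer_Suc)
  also have "\<dots> \<ge> z * 1" using step assms by (intro mult_mono) auto
  finally show ?case by simp
qed

lemma gam_ratio_m:
  fixes c :: real
  assumes "c - real m \<ge> 1" "m \<ge> 1"
  shows "Gamma (c - real m) / Gamma c \<le> 1 / (c - real m)"
proof -
  define z where "z = c - real m"
  have z: "z \<ge> 1" using assms by (simp add: z_def)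
  have "pochhammer z m = Gamma (z + real m) / Gamma z"
    by (rule pochhammer_Gamma) (use z in \<open>auto elim!: nonpos_Ints_cases\<close>)
  moreover have gz: "Gamma z > 0" using z by simp
  ultimately have "pochhammer z m * Gamma z = Gamma (z + real m)" by (simp add: field_simps)
  moreover have "z + real m = c" by (simp add: z_def)
  ultimately have "Gamma c = pochhammer z m * Gamma z" by simp
  moreover have "pochhammer z m \<ge> z" using poch_ge[OF z assms(2)] .
  moreover have "Gamma z > 0" using z by simp
  ultimately show ?thesis using z by (simp add: z_def[symmetric] field_simps)
qed



lemma R_bounds:
  assumes a: "a > 0" and x: "x \<ge> 0" and m: "m \<ge> 1" "a - 1 \<le> real m" "1 - a \<le> real m"
    and n: "n \<ge> Suc m"
  shows "1 - real m * x / (real n + a - 1) \<le> enn2real (HH a n x) / Gamma (real n + a)"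
    and "enn2real (HH a n x) / Gamma (real n + a) \<le> 1 + 4^m * x / (real n + a - 1) + 4^m * x^m / (real n + a - real m)"
proof -
  define c where "c = real n + a"
  have c1: "c - 1 > 0" "c - real m \<ge> 1" using n a by (auto simp: c_def)
  have gc: "Gamma c > 0" "Gamma (c-1) > 0" "Gamma (c - real m) > 0" using c1 a by (auto simp: c_def)
  have g1: "Gamma c = (c-1) * Gamma (c-1)" using gam1[of "c-1"] c1 by simp
  have gm: "Gamma (c - real m) / Gamma c \<le> 1 / (c - real m)" using gam_ratio_m[OF c1(2) m(1)] .
  note B = HH_bounds[OF a x m, of n]
  define U where "U = Gamma c + 4^m*x * Gamma (c - 1) + 4^m*x^m * Gamma (c - real m)"
  have U0: "U \<ge> 0" using gc x by (simp add: U_def)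
  have HU: "HH a n x \<le> ennreal U" using B(1) n by (simp add: U_def c_def)
  then have fin: "HH a n x < \<infinity>" by (rule le_less_trans) simp
  define h where "h = enn2real (HH a n x)"
  have h0: "h \<ge> 0" by (simp add: h_def)
  have Hh: "HH a n x = ennreal h" using fin by (simp add: h_def)
  have hU: "h \<le> U" using HU U0 by (simp add: Hh)
  have "ennreal (Gamma c) \<le> ennreal (h + real m * x * Gamma (c - 1))"
    using B(2) n h0 x gc by (simp add: Hh c_def ennreal_plus[symmetric] del: ennreal_plus)
  then have hL: "Gamma c \<le> h + real m * x * Gamma (c - 1)"
    using h0 x gc by (subst (asm) ennreal_le_iff) auto
  have gcn: "Gamma c \<noteq> 0" "Gamma (c-1) \<noteq> 0" "c - 1 \<noteq> 0" using gc(1,2) c1(1) by linarith+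
  have gr: "Gamma (c-1) / Gamma c = 1 / (c - 1)" unfolding g1 using gcn by simp
  have "(Gamma c - real m * x * Gamma (c-1)) / Gamma c = 1 - real m * x * (Gamma (c-1) / Gamma c)"
    using gc by (simp add: diff_divide_distrib)
  then have "1 - real m * x / (c - 1) = (Gamma c - real m * x * Gamma (c-1)) / Gamma c"
    by (simp add: gr)
  also have "\<dots> \<le> h / Gamma c" using hL gc by (intro divide_right_mono) auto
  finally show "1 - real m * x / (real n + a - 1) \<le> enn2real (HH a n x) / Gamma (real n + a)"
    by (simp add: c_def h_def)
  have "h / Gamma c \<le> U / Gamma c" using hU gc by (intro divide_right_mono) auto
  also have "\<dots> = 1 + 4^m * x * (Gamma (c-1) / Gamma c) + 4^m * x^m * (Gamma (c - real m) / Gamma c)"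
    using gc by (simp add: U_def field_simps)
  also note gr
  also have "1 + 4^m * x * (1 / (c - 1)) + 4^m * x^m * (Gamma (c - real m) / Gamma c)
      \<le> 1 + 4^m * x * (1 / (c - 1)) + 4^m * x^m * (1 / (c - real m))"
    using gm x by (intro add_left_mono mult_left_mono) auto
  finally show "enn2real (HH a n x) / Gamma (real n + a) \<le> 1 + 4^m * x / (real n + a - 1) + 4^m * x^m / (real n + a - real m)"
    by (simp add: c_def h_def)
qed

lemma R_lim:
  assumes a: "a > 0" and x: "x \<ge> 0"
  shows "(\<lambda>n. enn2real (HH a n x) / Gamma (real n + a)) \<longlonglongrightarrow> 1"
proof -
  define m where "m = nat \<lceil>\<bar>a - 1\<bar>\<rceil> + 1"
  have m: "m \<ge> 1" "a - 1 \<le> real m" "1 - a \<le> real m" unfolding m_def by linarith+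
  show ?thesis
  proof (rule tendsto_sandwich)
    show "eventually (\<lambda>n. 1 - real m * x / (real n + a - 1) \<le> enn2real (HH a n x) / Gamma (real n + a)) sequentially"
      using R_bounds(1)[OF a x m] by (auto simp: eventually_sequentially)
    show "eventually (\<lambda>n. enn2real (HH a n x) / Gamma (real n + a) \<le> 1 + 4^m * x / (real n + a - 1) + 4^m * x^m / (real n + a - real m)) sequentially"
      using R_bounds(2)[OF a x m] by (auto simp: eventually_sequentially)
    show "(\<lambda>n. 1 - real m * x / (real n + a - 1)) \<longlonglongrightarrow> 1" by real_asymp
    show "(\<lambda>n. 1 + 4^m * x / (real n + a - 1) + 4^m * x^m / (real n + a - real m)) \<longlonglongrightarrow> 1" by real_asymp
  qed
qed

theorem theorem5:
  fixes \<alpha> x :: real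
  assumes "\<alpha> > 0" and "x \<ge> 0"
  shows "(\<lambda>s. iter_tail (gamma_density \<alpha>) s x) \<longlonglongrightarrow> exp (- x)"
proof (rule LIMSEQ_imp_Suc)
  have eq: "iter_tail (gamma_density \<alpha>) (Suc n) x = exp (- x) * (enn2real (HH \<alpha> n x) / Gamma (real n + \<alpha>))" for n
  proof -
    have g: "Gamma \<alpha> > 0" using assms by simp
    have "GG \<alpha> n x = enn2real (HH \<alpha> n x) * (exp (- x) / Gamma \<alpha>)"
      unfolding GG_def NN_HH[OF assms] using g by (simp add: enn2real_mult)
    then show ?thesis using iter_eq[OF assms(1), of n] assms GG0[OF assms(1), of n] g
      by (simp add: field_simps)
  qed
  show "(\<lambda>n. iter_tail (gamma_density \<alpha>) (Suc n) x) \<longlonglongrightarrow> exp (- x)"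
    unfolding eq using tendsto_mult[OF tendsto_const R_lim[OF assms]] by simp
qed

end
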